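(* There exists a $9$-CMS$(9,2)$.
   Context: Let $I_n=\{0,1,\dots,n-1\}$. An $n\times n$ integer matrix is a general magic square if all row sums, column sums, the main diagonal sum and the back diagonal sum (entries $(i,n-1-i)$) are equal. A general magic square $M=(m_{i,j})$ is a general $t$-multimagic square if each entrywise power $M^{*e}=(m_{i,j}^e)$, $e=1,\dots,t$, is a general magic square; if moreover its entries are exactly $0,1,\dots,n^2-1$ it is an MS$(n,t)$. Define $S_e(n)=\frac{1}{n}\sum_{k\in I_{n^2}}k^e$. A family $\{B_0,\dots,B_{m-1}\}$ of MS$(n,t)$s, $B_s=(b^{(s)}_{i,j})$, is an $m$-CMS$(n,t)$ if (R1) $\sum_{s\in I_m}\sum_{j\in I_n}(b^{(s)}_{i,j})^{t+1}=mS_{t+1}(n)$ for every $i$; (R2) $\sum_{s\in I_m}\sum_{i\in I_n}(b^{(s)}_{i,j})^{t+1}=mS_{t+1}(n)$ for every $j$; (R3) $\sum_{s}\sum_{i}(b^{(s)}_{i,i})^{t+1}=\sum_{s}\sum_{i}(b^{(s)}_{i,n-1-i})^{t+1}=mS_{t+1}(n)$. *)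

theory Defs
  imports Complex_Main
begin

text \<open>An n x n integer matrix is represented as a function nat => nat => int;
only entries with indices in I_n = {..<n} are relevant.\<close>

definition general_magic :: "nat \<Rightarrow> (nat \<Rightarrow> nat \<Rightarrow> int) \<Rightarrow> bool" where
  "general_magic n M \<longleftrightarrow> (\<exists>c.
     (\<forall>i<n. (\<Sum>j<n. M i j) = c) \<and>
     (\<forall>j<n. (\<Sum>i<n. M i j) = c) \<and>
     (\<Sum>i<n. M i i) = c \<and>
     (\<Sum>i<n. M i (n - 1 - i)) = c)"

definition general_multimagic :: "nat \<Rightarrow> nat \<Rightarrow> (nat \<Rightarrow> nat \<Rightarrow> int) \<Rightarrow> bool" where
  "general_multimagic n t M \<longleftrightarrow> (\<forall>e\<in>{1..t}. general_magic n (\<lambda>i j. (M i j) ^ e))"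

definition MS :: "nat \<Rightarrow> nat \<Rightarrow> (nat \<Rightarrow> nat \<Rightarrow> int) \<Rightarrow> bool" where
  "MS n t M \<longleftrightarrow> general_multimagic n t M \<and>
     (\<lambda>(i, j). M i j) ` ({..<n} \<times> {..<n}) = int ` {..<n^2}"

definition S :: "nat \<Rightarrow> nat \<Rightarrow> rat" where
  "S e n = (1 / of_nat n) * (\<Sum>k<n^2. of_nat k ^ e)"

definition CMS :: "nat \<Rightarrow> nat \<Rightarrow> nat \<Rightarrow> (nat \<Rightarrow> nat \<Rightarrow> nat \<Rightarrow> int) \<Rightarrow> bool" where
  "CMS m n t B \<longleftrightarrow>
     (\<forall>s<m. MS n t (B s)) \<and>
     (\<forall>i<n. of_int (\<Sum>s<m. \<Sum>j<n. (B s i j) ^ (t + 1)) = of_nat m * S (t + 1) n) \<and>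
     (\<forall>j<n. of_int (\<Sum>s<m. \<Sum>i<n. (B s i j) ^ (t + 1)) = of_nat m * S (t + 1) n) \<and>
     of_int (\<Sum>s<m. \<Sum>i<n. (B s i i) ^ (t + 1)) = of_nat m * S (t + 1) n \<and>
     of_int (\<Sum>s<m. \<Sum>i<n. (B s i (n - 1 - i)) ^ (t + 1)) = of_nat m * S (t + 1) n"

end

theory Submission
  imports Defs
begin

definition tbl :: "int list list list" where
  "tbl = [[[49,74,24,35,57,1,36,70,14],[27,61,5,40,65,15,53,75,19],[44,66,10,45,79,23,31,56,6],[20,51,76,3,28,62,16,41,63],[7,32,54,11,42,67,21,46,80],[12,37,71,25,50,72,2,33,58],[78,22,47,55,8,30,68,9,43],[59,0,34,69,13,38,73,26,48],[64,17,39,77,18,52,60,4,29]],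
 [[52,77,18,29,60,4,39,64,17],[30,55,8,43,68,9,47,78,22],[38,69,13,48,73,26,34,59,0],[23,45,79,6,31,56,10,44,66],[1,35,57,14,36,70,24,49,74],[15,40,65,19,53,75,5,27,61],[72,25,50,58,2,33,71,12,37],[62,3,28,63,16,41,76,20,51],[67,11,42,80,21,46,54,7,32]],
 [[46,80,21,32,54,7,42,67,11],[33,58,2,37,71,12,50,72,25],[41,63,16,51,76,20,28,62,3],[26,48,73,0,34,59,13,38,69],[4,29,60,17,39,64,18,52,77],[9,43,68,22,47,78,8,30,55],[75,19,53,61,5,27,65,15,40],[56,6,31,66,10,44,79,23,45],[70,14,36,74,24,49,57,1,35]],
 [[50,72,25,33,58,2,37,71,12],[28,62,3,41,63,16,51,76,20],[42,67,11,46,80,21,32,54,7],[18,52,77,4,29,60,17,39,64],[8,30,55,9,43,68,22,47,78],[13,38,69,26,48,73,0,34,59],[79,23,45,56,6,31,66,10,44],[57,1,35,70,14,36,74,24,49],[65,15,40,75,19,53,61,5,27]],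
 [[53,75,19,27,61,5,40,65,15],[31,56,6,44,66,10,45,79,23],[36,70,14,49,74,24,35,57,1],[21,46,80,7,32,54,11,42,67],[2,33,58,12,37,71,25,50,72],[16,41,63,20,51,76,3,28,62],[73,26,48,59,0,34,69,13,38],[60,4,29,64,17,39,77,18,52],[68,9,43,78,22,47,55,8,30]],
 [[47,78,22,30,55,8,43,68,9],[34,59,0,38,69,13,48,73,26],[39,64,17,52,77,18,29,60,4],[24,49,74,1,35,57,14,36,70],[5,27,61,15,40,65,19,53,75],[10,44,66,23,45,79,6,31,56],[76,20,51,62,3,28,63,16,41],[54,7,32,67,11,42,80,21,46],[71,12,37,72,25,50,58,2,33]],
 [[48,73,26,34,59,0,38,69,13],[29,60,4,39,64,17,52,77,18],[43,68,9,47,78,22,30,55,8],[19,53,75,5,27,61,15,40,65],[6,31,56,10,44,66,23,45,79],[14,36,70,24,49,74,1,35,57],[80,21,46,54,7,32,67,11,42],[58,2,33,71,12,37,72,25,50],[63,16,41,76,20,51,62,3,28]],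
 [[51,76,20,28,62,3,41,63,16],[32,54,7,42,67,11,46,80,21],[37,71,12,50,72,25,33,58,2],[22,47,78,8,30,55,9,43,68],[0,34,59,13,38,69,26,48,73],[17,39,64,18,52,77,4,29,60],[74,24,49,57,1,35,70,14,36],[61,5,27,65,15,40,75,19,53],[66,10,44,79,23,45,56,6,31]],
 [[45,79,23,31,56,6,44,66,10],[35,57,1,36,70,14,49,74,24],[40,65,15,53,75,19,27,61,5],[25,50,72,2,33,58,12,37,71],[3,28,62,16,41,63,20,51,76],[11,42,67,21,46,80,7,32,54],[77,18,52,60,4,29,64,17,39],[55,8,30,68,9,43,78,22,47],[69,13,38,73,26,48,59,0,34]]]"

definition BB :: "nat \<Rightarrow> nat \<Rightarrow> nat \<Rightarrow> int" where
  "BB s i j = tbl ! s ! i ! j"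

definition lsum :: "nat \<Rightarrow> (nat \<Rightarrow> int) \<Rightarrow> int" where
  "lsum n f = sum_list (map f [0..<n])"

lemma sum_lsum: "(\<Sum>i<n. f i) = lsum n f"
  unfolding lsum_def by (simp add: sum_set_upt_conv_sum_list_nat[symmetric] lessThan_atLeast0)

lemma all_less: "(\<forall>i<n. P i) \<longleftrightarrow> list_all P [0..<n]"
  by (auto simp: list_all_iff)

definition gm :: "nat \<Rightarrow> (nat \<Rightarrow> nat \<Rightarrow> int) \<Rightarrow> bool" where
  "gm n M = (let c = lsum n (\<lambda>j. M 0 j) in
     list_all (\<lambda>i. lsum n (\<lambda>j. M i j) = c) [0..<n] \<and>
     list_all (\<lambda>j. lsum n (\<lambda>i. M i j) = c) [0..<n] \<and>
     lsum n (\<lambda>i. M i i) = c \<and> lsum n (\<lambda>i. M i (n - 1 - i)) = c)"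

lemma gm_imp: "gm n M \<Longrightarrow> general_magic n M"
  unfolding gm_def general_magic_def Let_def sum_lsum all_less by blast

lemma img_conv: "(\<lambda>(i, j). M i j) ` ({..<n} \<times> {..<n}) = set (map (\<lambda>(i, j). M i j) (List.product [0..<n] [0..<n]))"
  by (simp add: lessThan_atLeast0)

lemma img_conv2: "int ` {..<m} = set (map int [0..<m])"
  by (simp add: lessThan_atLeast0)

lemma S_conv: "S e n = (1 / of_nat n) * sum_list (map (\<lambda>k. of_nat k ^ e) [0..<n^2])"
  unfolding S_def by (simp add: sum_set_upt_conv_sum_list_nat[symmetric] lessThan_atLeast0)

lemma ms_from: "list_all (\<lambda>e. gm n (\<lambda>i j. (M i j) ^ e)) [1..<t+1] \<Longrightarrow>
   set (map (\<lambda>(i, j). M i j) (List.product [0..<n] [0..<n])) = set (map int [0..<n^2]) \<Longrightarrow> MS n t M"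
  unfolding MS_def general_multimagic_def img_conv img_conv2
  by (auto simp: list_all_iff intro!: gm_imp)

lemma main_check:
  "list_all (\<lambda>s. list_all (\<lambda>e. gm 9 (\<lambda>i j. (BB s i j) ^ e)) [1..<3] \<and>
     set (map (\<lambda>(i, j). BB s i j) (List.product [0..<9] [0..<9])) = set (map int [0..<81])) [0..<9] \<and>
   list_all (\<lambda>i. of_int (lsum 9 (\<lambda>s. lsum 9 (\<lambda>j. (BB s i j) ^ 3))) = (9::rat) * ((1 / 9) * sum_list (map (\<lambda>k. of_nat k ^ 3) [0..<81]))) [0..<9] \<and>
   list_all (\<lambda>j. of_int (lsum 9 (\<lambda>s. lsum 9 (\<lambda>i. (BB s i j) ^ 3))) = (9::rat) * ((1 / 9) * sum_list (map (\<lambda>k. of_nat k ^ 3) [0..<81]))) [0..<9] \<and>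
   of_int (lsum 9 (\<lambda>s. lsum 9 (\<lambda>i. (BB s i i) ^ 3))) = (9::rat) * ((1 / 9) * sum_list (map (\<lambda>k. of_nat k ^ 3) [0..<81])) \<and>
   of_int (lsum 9 (\<lambda>s. lsum 9 (\<lambda>i. (BB s i (9 - 1 - i)) ^ 3))) = (9::rat) * ((1 / 9) * sum_list (map (\<lambda>k. of_nat k ^ 3) [0..<81]))"
  unfolding BB_def tbl_def by code_simp

theorem lemma3p1:
  shows "\<exists>B. CMS 9 9 2 B"
proof (intro exI[of _ BB])
  note mc = main_check[THEN conjunct1] main_check[THEN conjunct2, THEN conjunct1]
    main_check[THEN conjunct2, THEN conjunct2, THEN conjunct1]
    main_check[THEN conjunct2, THEN conjunct2, THEN conjunct2, THEN conjunct1]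
    main_check[THEN conjunct2, THEN conjunct2, THEN conjunct2, THEN conjunct2]
  have s9: "S 3 9 = (1 / 9) * sum_list (map (\<lambda>k. of_nat k ^ 3) [0..<81])"
    by (simp add: S_conv)
  have 1: "\<forall>s<9. MS 9 2 (BB s)"
    using mc(1) unfolding all_less list_all_iff by (auto intro!: ms_from simp: list_all_iff)
  show "CMS 9 9 2 BB"
    unfolding CMS_def sum_lsum
    using 1 mc(2-5) unfolding all_less by (simp add: s9)
qed

end
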